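(* Let $(N_m)_{m\ge 0}$ be positive integers with $N_0=N$, and for each $m\ge1$ let $W_m:\mathbb{R}^{N_{m-1}}\to\mathbb{C}^{N_m}$ be linear with $W_m^*W_m=\mathrm{Id}$. Let $X$ be a random vector in $\mathbb{R}^N$ with $E(\|X\|^2)<\infty$ and let $(X_m)_{m\ge0}$ be its expected scattering layers. Then for every $M>0$, $$\lim_{m\to\infty}E\big(\|X_m\|\,\mathbf{1}_{\|X\|\le M}\big)=0.$$
   Context: For $z\in\mathbb{C}^n$, $|z|$ denotes the vector of coordinatewise complex moduli; $\|\cdot\|$ is the Euclidean norm. Expected scattering layers: $X_0=X$ and $X_{m+1}=|W_{m+1}(X_m-E(X_m))|\in\mathbb{R}^{N_{m+1}}$ for $m\ge0$. *)

theory Defs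
  imports "HOL-Probability.Probability"
begin

text \<open>Vectors of R^n / C^n are represented as functions on nat; only the
coordinates below the dimension matter. A linear map W : R^p -> C^q is given by its
complex q x p matrix (entries W i j, i < q, j < p).\<close>

definition vnorm :: "nat \<Rightarrow> (nat \<Rightarrow> real) \<Rightarrow> real" where
  "vnorm n x = sqrt (\<Sum>j<n. (x j)^2)"

definition apply_lin :: "(nat \<Rightarrow> nat \<Rightarrow> complex) \<Rightarrow> nat \<Rightarrow> (nat \<Rightarrow> real) \<Rightarrow> (nat \<Rightarrow> complex)" where
  "apply_lin A p x = (\<lambda>i. \<Sum>j<p. A i j * complex_of_real (x j))"

text \<open>Adjoint of the real-linear map R^p -> C^q (w.r.t. the real inner products
on R^p and on C^q = R^(2q), i.e. Re of the Hermitian product): C^q -> R^p.\<close>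
definition adj_lin :: "(nat \<Rightarrow> nat \<Rightarrow> complex) \<Rightarrow> nat \<Rightarrow> (nat \<Rightarrow> complex) \<Rightarrow> (nat \<Rightarrow> real)" where
  "adj_lin A q z = (\<lambda>j. Re (\<Sum>i<q. cnj (A i j) * z i))"

fun scat :: "'a measure \<Rightarrow> (nat \<Rightarrow> nat) \<Rightarrow> (nat \<Rightarrow> nat \<Rightarrow> nat \<Rightarrow> complex)
              \<Rightarrow> ('a \<Rightarrow> nat \<Rightarrow> real) \<Rightarrow> nat \<Rightarrow> 'a \<Rightarrow> nat \<Rightarrow> real" where
  "scat M N W X 0 = X"
| "scat M N W X (Suc m) = (\<lambda>\<omega> i.
     if i < N (Suc m) then
       cmod (apply_lin (W (Suc m)) (N m)
               (\<lambda>j. scat M N W X m \<omega> j - integral\<^sup>L M (\<lambda>\<eta>. scat M N W X m \<eta> j)) i)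
     else 0)"

end

theory Submission imports Defs begin

lemma cmod_sq_Re: "(cmod z)^2 = Re (cnj z * z)"
  by (simp add: cmod_power2) (simp add: power2_eq_square)

lemma apply_lin_cnj: "cnj (apply_lin A p x i) = (\<Sum>j<p. cnj (A i j) * complex_of_real (x j))"
  by (simp add: apply_lin_def)

lemma iso_gen:
  assumes "\<forall>x j. j < p \<longrightarrow> adj_lin A q (apply_lin A p x) j = x j"
  shows "(\<Sum>i<q. (cmod (apply_lin A p x i))^2) = (\<Sum>j<p. (x j)^2)"
proof -
  let ?z = "apply_lin A p x"
  have "(\<Sum>i<q. (cmod (?z i))^2) = Re (\<Sum>i<q. cnj (?z i) * ?z i)"
    by (simp add: cmod_sq_Re)
  also have "(\<Sum>i<q. cnj (?z i) * ?z i) = (\<Sum>i<q. \<Sum>j<p. complex_of_real (x j) * (cnj (A i j) * ?z i))"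
    by (simp add: apply_lin_cnj sum_distrib_right sum_distrib_left mult_ac)
  also have "\<dots> = (\<Sum>j<p. complex_of_real (x j) * (\<Sum>i<q. cnj (A i j) * ?z i))"
    by (subst sum.swap) (simp add: sum_distrib_left)
  also have "Re \<dots> = (\<Sum>j<p. x j * adj_lin A q ?z j)"
    by (simp add: adj_lin_def Re_sum)
  also have "\<dots> = (\<Sum>j<p. (x j)^2)"
    using assms by (intro sum.cong) (auto simp: power2_eq_square)
  finally show ?thesis .
qed

lemma apply_lin_diff: "apply_lin A p x i - apply_lin A p y i = apply_lin A p (\<lambda>j. x j - y j) i"
  by (simp add: apply_lin_def sum_subtractf[symmetric] algebra_simps)

lemma lip_gen:
  assumes "\<forall>x j. j < p \<longrightarrow> adj_lin A q (apply_lin A p x) j = x j"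
  shows "(\<Sum>i<q. (cmod (apply_lin A p x i) - cmod (apply_lin A p y i))^2) \<le> (\<Sum>j<p. (x j - y j)^2)"
proof -
  have "(\<Sum>i<q. (cmod (apply_lin A p x i) - cmod (apply_lin A p y i))^2)
        \<le> (\<Sum>i<q. (cmod (apply_lin A p (\<lambda>j. x j - y j) i))^2)"
  proof (intro sum_mono)
    fix i
    have "\<bar>cmod (apply_lin A p x i) - cmod (apply_lin A p y i)\<bar> \<le> cmod (apply_lin A p x i - apply_lin A p y i)"
      by (rule norm_triangle_ineq3)
    then show "(cmod (apply_lin A p x i) - cmod (apply_lin A p y i))^2 \<le> (cmod (apply_lin A p (\<lambda>j. x j - y j) i))^2"
      by (metis apply_lin_diff abs_le_square_iff abs_norm_cancel)
  qed
  also have "\<dots> = (\<Sum>j<p. (x j - y j)^2)" using iso_gen[OF assms] by simp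
  finally show ?thesis .
qed


lemma abs_le_1_sq: "\<bar>y::real\<bar> \<le> 1 + y^2"
proof -
  have "0 \<le> (\<bar>y\<bar> - 1)^2" by simp
  also have "(\<bar>y\<bar> - 1)^2 = y^2 - 2*\<bar>y\<bar> + 1" by (simp add: power2_diff power2_abs)
  finally show ?thesis using zero_le_power2[of y] by linarith
qed

lemma diff_sq_le: "((a::real) - b)^2 \<le> 2*a^2 + 2*b^2"
proof -
  have "0 \<le> (a+b)^2" by simp
  moreover have "2*a^2 + 2*b^2 - (a-b)^2 = (a+b)^2" by (simp add: power2_eq_square algebra_simps)
  ultimately show ?thesis by linarith
qed

lemma seq_lemma:
  fixes t c :: "nat \<Rightarrow> real"
  assumes t0: "\<And>m. 0 \<le> t m" and c0: "\<And>m. 0 \<le> c m" and cl: "c \<longlonglongrightarrow> 0"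
    and p: "0 < p" "p \<le> 1"
    and r: "\<And>m. m \<ge> 1 \<Longrightarrow> t (Suc m) \<le> t m - p * max (t m - e) 0 + c m"
    and d: "\<delta> > 0"
  shows "\<exists>K. \<forall>m\<ge>K. t m \<le> e + 2*\<delta>"
proof -
  define v where "v m = max (t m - e) 0" for m
  have vr: "v (Suc m) \<le> (1-p) * v m + c m" if "m \<ge> 1" for m
  proof (cases "t m \<ge> e")
    case True
    then have "t (Suc m) - e \<le> (1-p) * v m + c m" using r[OF that] by (simp add: v_def algebra_simps)
    moreover have "0 \<le> (1-p) * v m + c m" using p c0[of m] by (simp add: v_def)
    ultimately show ?thesis by (simp add: v_def)
  next
    case False
    then have "t (Suc m) - e \<le> c m" using r[OF that] by (simp add: v_def)
    moreover have "0 \<le> (1-p) * v m" using p by (simp add: v_def)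
    ultimately show ?thesis using c0[of m] by (simp add: v_def)
  qed
  have "eventually (\<lambda>m. c m < p * \<delta>) sequentially"
    using cl p d by (intro order_tendstoD) auto
  then obtain K1 where K1: "\<And>m. m \<ge> K1 \<Longrightarrow> c m < p * \<delta>" by (auto simp: eventually_sequentially)
  define K0 where "K0 = max K1 1"
  have wr: "v (Suc m) - \<delta> \<le> (1-p) * (v m - \<delta>)" if "m \<ge> K0" for m
    using vr[of m] K1[of m] that by (simp add: K0_def algebra_simps)
  have wn: "v (K0 + n) - \<delta> \<le> (1-p)^n * (v K0 - \<delta>)" for n
  proof (induction n)
    case 0 then show ?case by simp
  next
    case (Suc n)
    have "v (K0 + Suc n) - \<delta> \<le> (1-p) * (v (K0 + n) - \<delta>)" using wr[of "K0+n"] by simp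
    also have "\<dots> \<le> (1-p) * ((1-p)^n * (v K0 - \<delta>))" using Suc p by (intro mult_left_mono) auto
    finally show ?case by simp
  qed
  have "(\<lambda>n. (1-p)^n * (v K0 - \<delta>)) \<longlonglongrightarrow> 0 * (v K0 - \<delta>)"
    using p by (intro tendsto_mult LIMSEQ_power_zero tendsto_const) auto
  then have "eventually (\<lambda>n. (1-p)^n * (v K0 - \<delta>) < \<delta>) sequentially"
    using d by (intro order_tendstoD) auto
  then obtain n0 where n0: "\<And>n. n \<ge> n0 \<Longrightarrow> (1-p)^n * (v K0 - \<delta>) < \<delta>" by (auto simp: eventually_sequentially)
  show ?thesis
  proof (intro exI allI impI)
    fix m assume "m \<ge> K0 + n0"
    then obtain n where n: "m = K0 + n" "n \<ge> n0" by (metis add_le_imp_le_left le_add_diff_inverse le_add1 order_trans)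
    have "v m \<le> 2 * \<delta>" using wn[of n] n0[OF n(2)] n(1) by simp
    then show "t m \<le> e + 2 * \<delta>" by (simp add: v_def)
  qed
qed

locale sc = prob_space M for M :: "'a measure" +
  fixes N :: "nat \<Rightarrow> nat" and W :: "nat \<Rightarrow> nat \<Rightarrow> nat \<Rightarrow> complex" and X :: "'a \<Rightarrow> nat \<Rightarrow> real"
  assumes Npos: "\<And>m. N m > 0"
  and iso: "\<And>m x j. m \<ge> 1 \<Longrightarrow> j < N (m-1) \<Longrightarrow> adj_lin (W m) (N m) (apply_lin (W m) (N (m - 1)) x) j = x j"
  and measX: "\<And>j. j < N 0 \<Longrightarrow> (\<lambda>\<omega>. X \<omega> j) \<in> borel_measurable M"
  and intX: "integrable M (\<lambda>\<omega>. (vnorm (N 0) (X \<omega>))^2)"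
begin

abbreviation Y where "Y \<equiv> scat M N W X"
definition mn where "mn m j = integral\<^sup>L M (\<lambda>\<eta>. Y m \<eta> j)"
definition sq where "sq m \<omega> = (\<Sum>j<N m. (Y m \<omega> j)^2)"
definition cc where "cc m = (\<Sum>j<N m. (mn m j)^2)"
definition dd where "dd \<omega> \<eta> = (\<Sum>j<N 0. (X \<omega> j - X \<eta> j)^2)"

lemma iso': "\<forall>x j. j < N m \<longrightarrow> adj_lin (W (Suc m)) (N (Suc m)) (apply_lin (W (Suc m)) (N m) x) j = x j"
  using iso[of "Suc m"] by simp

lemma Y_Suc: "Y (Suc m) \<omega> i = (if i < N (Suc m) then cmod (apply_lin (W (Suc m)) (N m) (\<lambda>j. Y m \<omega> j - mn m j) i) else 0)"
  by (simp only: scat.simps mn_def)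

declare scat.simps(2)[simp del]

lemma sq_Suc: "sq (Suc m) \<omega> = (\<Sum>j<N m. (Y m \<omega> j - mn m j)^2)"
proof -
  have "sq (Suc m) \<omega> = (\<Sum>i<N (Suc m). (cmod (apply_lin (W (Suc m)) (N m) (\<lambda>j. Y m \<omega> j - mn m j) i))^2)"
    unfolding sq_def by (intro sum.cong) (auto simp: Y_Suc)
  also have "\<dots> = (\<Sum>j<N m. (Y m \<omega> j - mn m j)^2)" by (rule iso_gen[OF iso'])
  finally show ?thesis .
qed

lemma Y_nonneg: "0 \<le> Y (Suc m) \<omega> i" by (simp add: Y_Suc)

lemma dist_step: "(\<Sum>i<N (Suc m). (Y (Suc m) \<omega> i - Y (Suc m) \<eta> i)^2) \<le> (\<Sum>j<N m. (Y m \<omega> j - Y m \<eta> j)^2)"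
proof -
  have "(\<Sum>i<N (Suc m). (Y (Suc m) \<omega> i - Y (Suc m) \<eta> i)^2) =
     (\<Sum>i<N (Suc m). (cmod (apply_lin (W (Suc m)) (N m) (\<lambda>j. Y m \<omega> j - mn m j) i)
        - cmod (apply_lin (W (Suc m)) (N m) (\<lambda>j. Y m \<eta> j - mn m j) i))^2)"
    by (intro sum.cong) (auto simp: Y_Suc)
  also have "\<dots> \<le> (\<Sum>j<N m. ((Y m \<omega> j - mn m j) - (Y m \<eta> j - mn m j))^2)"
    by (rule lip_gen[OF iso'])
  finally show ?thesis by simp
qed

lemma dist_le: "(\<Sum>j<N m. (Y m \<omega> j - Y m \<eta> j)^2) \<le> dd \<omega> \<eta>"
proof (induction m)
  case 0 then show ?case by (simp add: dd_def)
next
  case (Suc m) then show ?case using dist_step[of m \<omega> \<eta>] by linarith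
qed

lemma measY: "i < N m \<Longrightarrow> (\<lambda>\<omega>. Y m \<omega> i) \<in> borel_measurable M"
proof (induction m arbitrary: i)
  case (0 i) then show ?case using measX by simp
next
  case (Suc m i)
  have "(\<lambda>\<omega>. cmod (apply_lin (W (Suc m)) (N m) (\<lambda>j. Y m \<omega> j - mn m j) i)) \<in> borel_measurable M"
  proof -
    have S: "(\<lambda>\<omega>. \<Sum>k<N m. W (Suc m) i k * complex_of_real (Y m \<omega> k - mn m k)) \<in> borel_measurable M"
    proof (rule borel_measurable_sum)
    fix k assume "k \<in> {..<N m}"
    then have [measurable]: "(\<lambda>\<omega>. Y m \<omega> k) \<in> borel_measurable M" using Suc.IH by auto
    show "(\<lambda>\<omega>. W (Suc m) i k * complex_of_real (Y m \<omega> k - mn m k)) \<in> borel_measurable M"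
      by measurable
  qed
  show ?thesis unfolding apply_lin_def using S by measurable
  qed
  then show ?case using Suc.prems by (simp add: Y_Suc[abs_def])
qed

lemma meas_sq: "sq m \<in> borel_measurable M"
  unfolding sq_def[abs_def] by (intro borel_measurable_sum borel_measurable_power measY) auto

lemma sq_nonneg: "0 \<le> sq m \<omega>" unfolding sq_def by (intro sum_nonneg) auto

lemma Y_sq_le: "j < N m \<Longrightarrow> (Y m \<omega> j)^2 \<le> sq m \<omega>"
  unfolding sq_def by (rule member_le_sum) auto

lemma sq0: "sq 0 \<omega> = (vnorm (N 0) (X \<omega>))^2"
  by (simp add: sq_def vnorm_def sum_nonneg)

lemma integ: "integrable M (sq m) \<and> (\<forall>j<N m. integrable M (\<lambda>\<omega>. Y m \<omega> j))"
proof (induction m)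
  case 0
  have i0: "integrable M (sq 0)" using intX by (simp add: sq0[abs_def])
  then show ?case
  proof (intro conjI allI impI)
    fix j assume j: "j < N 0"
    show "integrable M (\<lambda>\<omega>. Y 0 \<omega> j)"
    proof (rule Bochner_Integration.integrable_bound)
      show "integrable M (\<lambda>\<omega>. 1 + sq 0 \<omega>)" using i0 by simp
      show "(\<lambda>\<omega>. Y 0 \<omega> j) \<in> borel_measurable M" using measY j by blast
      show "AE x in M. norm (Y 0 x j) \<le> norm (1 + sq 0 x)"
      proof (intro AE_I2)
        fix x
        have "(Y 0 x j)^2 \<le> sq 0 x" using Y_sq_le j by blast
        moreover have "\<bar>Y 0 x j\<bar> \<le> 1 + (Y 0 x j)^2"
          by (rule abs_le_1_sq)
        ultimately show "norm (Y 0 x j) \<le> norm (1 + sq 0 x)" using sq_nonneg[of 0 x] by simp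
      qed
    qed
  qed
next
  case (Suc m)
  then have im: "integrable M (sq m)" and iY: "\<And>j. j < N m \<Longrightarrow> integrable M (\<lambda>\<omega>. Y m \<omega> j)" by auto
  have iS: "integrable M (sq (Suc m))"
    unfolding sq_Suc[abs_def]
  proof (intro Bochner_Integration.integrable_sum)
    fix j assume j: "j \<in> {..<N m}"
    show "integrable M (\<lambda>\<omega>. (Y m \<omega> j - mn m j)^2)"
    proof (rule Bochner_Integration.integrable_bound)
      show "integrable M (\<lambda>\<omega>. 2 * sq m \<omega> + 2 * (mn m j)^2)" using im by simp
      have [measurable]: "(\<lambda>\<omega>. Y m \<omega> j) \<in> borel_measurable M" using measY j by auto
      show "(\<lambda>\<omega>. (Y m \<omega> j - mn m j)^2) \<in> borel_measurable M" by measurable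
      show "AE x in M. norm ((Y m x j - mn m j)^2) \<le> norm (2 * sq m x + 2 * (mn m j)^2)"
      proof (intro AE_I2)
        fix x
        have "(Y m x j)^2 \<le> sq m x" using Y_sq_le j by blast
        moreover have "(Y m x j - mn m j)^2 \<le> 2 * (Y m x j)^2 + 2 * (mn m j)^2"
          by (rule diff_sq_le)
        ultimately show "norm ((Y m x j - mn m j)^2) \<le> norm (2 * sq m x + 2 * (mn m j)^2)"
          using sq_nonneg[of m x] by simp
      qed
    qed
  qed
  then show ?case
  proof (intro conjI allI impI)
    fix j assume j: "j < N (Suc m)"
    show "integrable M (\<lambda>\<omega>. Y (Suc m) \<omega> j)"
    proof (rule Bochner_Integration.integrable_bound)
      show "integrable M (\<lambda>\<omega>. 1 + sq (Suc m) \<omega>)" using iS by simp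
      show "(\<lambda>\<omega>. Y (Suc m) \<omega> j) \<in> borel_measurable M" using measY j by blast
      show "AE x in M. norm (Y (Suc m) x j) \<le> norm (1 + sq (Suc m) x)"
      proof (intro AE_I2)
        fix x
        have "(Y (Suc m) x j)^2 \<le> sq (Suc m) x" using Y_sq_le j by blast
        moreover have "\<bar>Y (Suc m) x j\<bar> \<le> 1 + (Y (Suc m) x j)^2"
          by (rule abs_le_1_sq)
        ultimately show "norm (Y (Suc m) x j) \<le> norm (1 + sq (Suc m) x)" using sq_nonneg[of "Suc m" x] by simp
      qed
    qed
  qed
qed


lemma cc_nonneg: "0 \<le> cc m" unfolding cc_def by (intro sum_nonneg) auto

lemma pw: "sq (Suc m) \<omega> = sq m \<omega> - 2 * (\<Sum>j<N m. mn m j * Y m \<omega> j) + cc m"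
  unfolding sq_Suc unfolding sq_def cc_def
  by (simp add: power2_diff sum.distrib sum_subtractf sum_distrib_left mult_ac)

lemma intY: "j < N m \<Longrightarrow> integrable M (\<lambda>\<omega>. Y m \<omega> j)" using integ by blast
lemma intsq: "integrable M (sq m)" using integ by blast

lemma energy: "integral\<^sup>L M (sq (Suc m)) = integral\<^sup>L M (sq m) - cc m"
proof -
  have iL: "integrable M (\<lambda>\<omega>. \<Sum>j<N m. mn m j * Y m \<omega> j)"
    by (intro Bochner_Integration.integrable_sum integrable_mult_right intY) auto
  have L: "integral\<^sup>L M (\<lambda>\<omega>. \<Sum>j<N m. mn m j * Y m \<omega> j) = cc m"
    by (subst Bochner_Integration.integral_sum)
       (auto intro!: integrable_mult_right intY simp: cc_def mn_def power2_eq_square)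
  have "integral\<^sup>L M (sq (Suc m)) = integral\<^sup>L M (\<lambda>\<omega>. (sq m \<omega> - 2 * (\<Sum>j<N m. mn m j * Y m \<omega> j)) + cc m)"
    by (simp add: pw[abs_def])
  also have "\<dots> = integral\<^sup>L M (sq m) - 2 * cc m + cc m"
    using iL intsq L by (simp add: prob_space)
  finally show ?thesis by simp
qed

lemma cum: "integral\<^sup>L M (sq m) = integral\<^sup>L M (sq 0) - (\<Sum>k<m. cc k)"
  by (induction m) (simp_all add: energy)

lemma summ: "summable cc"
proof (rule summableI_nonneg_bounded)
  fix n
  have "0 \<le> integral\<^sup>L M (sq n)" by (intro Bochner_Integration.integral_nonneg sq_nonneg)
  then show "sum cc {..<n} \<le> integral\<^sup>L M (sq 0)" using cum[of n] by simp
qed (rule cc_nonneg)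

lemma cc_lim: "cc \<longlonglongrightarrow> 0" using summ by (rule summable_LIMSEQ_zero)

lemma measdd: "(\<lambda>\<eta>. dd \<omega> \<eta>) \<in> borel_measurable M"
  unfolding dd_def
proof (rule borel_measurable_sum)
  fix j assume "j \<in> {..<N 0}"
  then have [measurable]: "(\<lambda>\<eta>. X \<eta> j) \<in> borel_measurable M" using measX by auto
  show "(\<lambda>\<eta>. (X \<omega> j - X \<eta> j)^2) \<in> borel_measurable M" by measurable
qed

lemma setS: "{\<eta>\<in>space M. dd \<omega> \<eta> \<le> e} \<in> sets M"
  using measdd[of \<omega>] by measurable

lemma rec:
  "sq (Suc (Suc k)) \<omega> \<le> sq (Suc k) \<omega> - prob {\<eta>\<in>space M. dd \<omega> \<eta> \<le> e} * max (sq (Suc k) \<omega> - e) 0 + cc (Suc k)"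
proof -
  define m where "m = Suc k"
  define S where "S = {\<eta>\<in>space M. dd \<omega> \<eta> \<le> e}"
  define G where "G = (\<lambda>\<eta>. \<Sum>j<N m. 2 * Y m \<omega> j * Y m \<eta> j)"
  have SM: "S \<in> sets M" unfolding S_def by (rule setS)
  have iG: "integrable M G" unfolding G_def
    by (intro Bochner_Integration.integrable_sum integrable_mult_right intY) auto
  have IG: "integral\<^sup>L M G = 2 * (\<Sum>j<N m. mn m j * Y m \<omega> j)"
    unfolding G_def
    by (subst Bochner_Integration.integral_sum)
       (auto intro!: integrable_mult_right intY simp: mn_def sum_distrib_left mult_ac)
  have Gge: "max (sq m \<omega> - e) 0 * indicator S \<eta> \<le> G \<eta>" for \<eta>
  proof -
    have G0: "0 \<le> G \<eta>" unfolding G_def m_def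
      by (intro sum_nonneg mult_nonneg_nonneg Y_nonneg) auto
    have "G \<eta> = sq m \<omega> + sq m \<eta> - (\<Sum>j<N m. (Y m \<omega> j - Y m \<eta> j)^2)"
      unfolding G_def sq_def
      by (simp add: power2_diff sum.distrib sum_subtractf sum_distrib_left mult_ac)
    then have G1: "sq m \<omega> - dd \<omega> \<eta> \<le> G \<eta>" using dist_le[of m \<omega> \<eta>] sq_nonneg[of m \<eta>] by linarith
    show ?thesis
    proof (cases "\<eta> \<in> S")
      case True then have "dd \<omega> \<eta> \<le> e" by (simp add: S_def)
      then show ?thesis using True G0 G1 by simp
    next
      case False then show ?thesis using G0 by simp
    qed
  qed
  have "integral\<^sup>L M (\<lambda>\<eta>. max (sq m \<omega> - e) 0 * indicator S \<eta>) \<le> integral\<^sup>L M G"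
    by (intro integral_mono iG Gge integrable_mult_right integrable_real_indicator SM) (auto simp: less_top[symmetric])
  moreover have "integral\<^sup>L M (\<lambda>\<eta>. max (sq m \<omega> - e) 0 * indicator S \<eta>) = max (sq m \<omega> - e) 0 * prob S"
  proof -
    have Sint: "S \<inter> space M = S" using sets.sets_into_space[OF SM] by auto
    show ?thesis by (simp add: Sint)
  qed
  ultimately have "max (sq m \<omega> - e) 0 * prob S \<le> 2 * (\<Sum>j<N m. mn m j * Y m \<omega> j)" using IG by linarith
  then show ?thesis using pw[of m \<omega>] unfolding m_def S_def by (simp add: mult.commute)
qed


lemma rec':
  assumes "m \<ge> 1"
  shows "sq (Suc m) \<omega> \<le> sq m \<omega> - prob {\<eta>\<in>space M. dd \<omega> \<eta> \<le> e} * max (sq m \<omega> - e) 0 + cc m"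
proof -
  obtain k where "m = Suc k" using assms by (cases m) auto
  then show ?thesis using rec[of k \<omega> e] by simp
qed

lemma sq_tendsto:
  assumes pos: "\<And>k. prob {\<eta>\<in>space M. dd \<omega> \<eta> \<le> 1 / real (Suc k)} > 0"
  shows "(\<lambda>m. sq m \<omega>) \<longlonglongrightarrow> 0"
proof (rule LIMSEQ_I)
  fix r :: real assume r: "0 < r"
  then have "0 < r/2" by simp
  from ex_inverse_of_nat_less[OF this] obtain n :: nat where n: "0 < n" "inverse (real n) < r/2" by auto
  define e where "e = 1 / real (Suc (n - 1))"
  have e: "e < r/2" using n by (simp add: e_def inverse_eq_divide)
  define p where "p = prob {\<eta>\<in>space M. dd \<omega> \<eta> \<le> e}"
  have p: "0 < p" "p \<le> 1" using pos[of "n-1"] by (auto simp: p_def e_def)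
  obtain K where K: "\<And>m. m \<ge> K \<Longrightarrow> sq m \<omega> \<le> e + 2*(r/8)"
    using seq_lemma[of "\<lambda>m. sq m \<omega>" cc p e "r/8"] sq_nonneg cc_nonneg cc_lim p rec'[of _ \<omega> e] r
    unfolding p_def by auto
  show "\<exists>no. \<forall>m\<ge>no. norm (sq m \<omega> - 0) < r"
  proof (intro exI allI impI)
    fix m assume "m \<ge> K"
    then show "norm (sq m \<omega> - 0) < r" using K[of m] e r sq_nonneg[of m \<omega>] by simp
  qed
qed

lemma bound:
  assumes "vnorm (N 0) (X \<omega>) \<le> B"
  shows "sq m \<omega> \<le> 3 * B^2 + 2 * cc 0 + suminf cc"
proof -
  have vn: "0 \<le> vnorm (N 0) (X \<omega>)" by (simp add: vnorm_def sum_nonneg)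
  have s0: "sq 0 \<omega> \<le> B^2" unfolding sq0 using assms vn by (intro power_mono) auto
  have s1: "sq 1 \<omega> \<le> 2 * sq 0 \<omega> + 2 * cc 0"
  proof -
    have "sq 1 \<omega> = (\<Sum>j<N 0. (Y 0 \<omega> j - mn 0 j)^2)" using sq_Suc[of 0 \<omega>] by simp
    also have "\<dots> \<le> (\<Sum>j<N 0. 2 * (Y 0 \<omega> j)^2 + 2 * (mn 0 j)^2)" by (intro sum_mono diff_sq_le)
    also have "\<dots> = 2 * sq 0 \<omega> + 2 * cc 0" by (simp add: sq_def cc_def sum.distrib sum_distrib_left)
    finally show ?thesis .
  qed
  have sS: "sq (Suc m) \<omega> \<le> sq 1 \<omega> + (\<Sum>k<Suc m. cc k)" for m
  proof (induction m)
    case 0 then show ?case using cc_nonneg[of 0] by simp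
  next
    case (Suc m)
    have "0 \<le> prob {\<eta>\<in>space M. dd \<omega> \<eta> \<le> 0} * max (sq (Suc m) \<omega> - 0) 0" by simp
    then have "sq (Suc (Suc m)) \<omega> \<le> sq (Suc m) \<omega> + cc (Suc m)" using rec[of m \<omega> 0] by linarith
    then show ?case using Suc by simp
  qed
  have sl: "(\<Sum>k<n. cc k) \<le> suminf cc" for n
    using summ cc_nonneg by (intro sum_le_suminf) auto
  have c0: "0 \<le> cc 0" "0 \<le> suminf cc" using cc_nonneg summ by (auto intro: suminf_nonneg)
  show ?thesis
  proof (cases m)
    case 0
    have "0 \<le> B^2" by simp
    then have "sq 0 \<omega> \<le> 3 * B^2 + 2 * cc 0 + suminf cc" using s0 c0 by linarith
    then show ?thesis using 0 by simp
  next
    case (Suc k)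
    have "sq (Suc k) \<omega> \<le> 3 * B^2 + 2 * cc 0 + suminf cc"
      using sS[of k] sl[of "Suc k"] s1 s0 c0 zero_le_power2[of B] by linarith
    then show ?thesis using Suc by simp
  qed
qed


lemma support:
  assumes e: "e > 0"
  shows "AE \<omega> in M. prob {\<eta>\<in>space M. dd \<omega> \<eta> \<le> e} > 0"
proof -
  define n where "n = N 0"
  have n0: "n > 0" using Npos by (simp add: n_def)
  define h where "h = sqrt (e / n)"
  have hpos: "h > 0" using e n0 by (simp add: h_def)
  have hsq: "h^2 = e / n" using e n0 by (simp add: h_def)
  define q where "q \<omega> = map (\<lambda>j. \<lfloor>X \<omega> j / h\<rfloor>) [0..<n]" for \<omega>
  define Q where "Q l = {\<eta>\<in>space M. q \<eta> = l}" for l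
  have QM: "Q l \<in> sets M" for l
  proof (cases "length l = n")
    case False
    then have "Q l = {}" by (auto simp: Q_def q_def)
    then show ?thesis by simp
  next
    case True
    have "Q l = {\<eta>\<in>space M. \<forall>j\<in>{..<n}. \<lfloor>X \<eta> j / h\<rfloor> = l!j}"
      using True by (auto simp: Q_def q_def list_eq_iff_nth_eq)
    also have "\<dots> \<in> sets M"
    proof (rule sets.sets_Collect_finite_All)
      fix j assume "j \<in> {..<n}"
      then have [measurable]: "(\<lambda>\<eta>. X \<eta> j) \<in> borel_measurable M" using measX by (auto simp: n_def)
      show "{\<eta>\<in>space M. \<lfloor>X \<eta> j / h\<rfloor> = l!j} \<in> sets M" by measurable
    qed simp
    finally show ?thesis .
  qed
  define Z where "Z = (\<Union>l\<in>{l. prob (Q l) = 0}. Q l)"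
  have Znull: "Z \<in> null_sets M" unfolding Z_def
    by (intro null_sets_UN') (auto intro!: null_setsI QM simp: emeasure_eq_measure)
  show ?thesis
  proof (rule AE_I'[OF Znull], safe)
    fix \<omega> assume \<omega>: "\<omega> \<in> space M" and np: "\<not> 0 < prob {\<eta>\<in>space M. dd \<omega> \<eta> \<le> e}"
    have sub: "Q (q \<omega>) \<subseteq> {\<eta>\<in>space M. dd \<omega> \<eta> \<le> e}"
    proof safe
      fix \<eta> assume "\<eta> \<in> Q (q \<omega>)"
      then have \<eta>: "\<eta> \<in> space M" and qq: "q \<eta> = q \<omega>" by (auto simp: Q_def)
      have fl: "\<lfloor>X \<eta> j / h\<rfloor> = \<lfloor>X \<omega> j / h\<rfloor>" if "j < n" for j
        using qq that by (auto simp: q_def list_eq_iff_nth_eq)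
      have "(X \<omega> j - X \<eta> j)^2 \<le> e / n" if j: "j < n" for j
      proof -
        have "\<bar>X \<omega> j / h - X \<eta> j / h\<bar> < 1"
          using fl[OF j] by linarith
        then have "\<bar>X \<omega> j - X \<eta> j\<bar> < h" using hpos by (simp add: diff_divide_distrib[symmetric] field_simps)
        then have "(X \<omega> j - X \<eta> j)^2 \<le> h^2"
          by (metis abs_ge_zero abs_le_square_iff less_imp_le power2_abs abs_of_pos hpos)
        then show ?thesis using hsq by simp
      qed
      then have "dd \<omega> \<eta> \<le> (\<Sum>j<n. e / n)" unfolding dd_def n_def[symmetric] by (intro sum_mono) auto
      also have "\<dots> = e" using n0 by simp
      finally show "dd \<omega> \<eta> \<le> e" .
      show "\<eta> \<in> space M" by (fact \<eta>)
    qed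
    have "prob (Q (q \<omega>)) \<le> prob {\<eta>\<in>space M. dd \<omega> \<eta> \<le> e}"
      by (intro finite_measure_mono sub setS)
    then have "prob (Q (q \<omega>)) = 0" using np measure_nonneg[of M "Q (q \<omega>)"] by linarith
    moreover have "\<omega> \<in> Q (q \<omega>)" using \<omega> by (simp add: Q_def)
    ultimately show "\<omega> \<in> Z" by (auto simp: Z_def)
  qed
qed


lemma final:
  "(\<lambda>m. integral\<^sup>L M (\<lambda>\<omega>. vnorm (N m) (Y m \<omega>) * indicator {\<eta>. vnorm (N 0) (X \<eta>) \<le> B} \<omega>)) \<longlonglongrightarrow> 0"
proof -
  define A where "A = {\<eta>. vnorm (N 0) (X \<eta>) \<le> B}"
  define Kb where "Kb = 3 * B^2 + 2 * cc 0 + suminf cc"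
  have vn: "vnorm (N m) (Y m \<omega>) = sqrt (sq m \<omega>)" for m \<omega> by (simp add: vnorm_def sq_def)
  have vn0: "vnorm (N 0) (X \<omega>) = sqrt (sq 0 \<omega>)" for \<omega> using vn[of 0 \<omega>] by simp
  have [measurable]: "sq m \<in> borel_measurable M" for m by (rule meas_sq)
  have "A \<inter> space M = {\<omega>\<in>space M. sqrt (sq 0 \<omega>) \<le> B}" by (auto simp: A_def vn0)
  also have "\<dots> \<in> sets M" by measurable
  finally have AM: "(indicator A :: 'a \<Rightarrow> real) \<in> borel_measurable M"
    by (simp add: borel_measurable_indicator_iff)
  have AEpos: "AE \<omega> in M. \<forall>k. prob {\<eta>\<in>space M. dd \<omega> \<eta> \<le> 1 / real (Suc k)} > 0"
    unfolding AE_all_countable by (intro allI support) simp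
  have lim: "AE \<omega> in M. (\<lambda>m. sqrt (sq m \<omega>) * indicator A \<omega>) \<longlonglongrightarrow> 0"
    using AEpos
  proof (rule AE_mp, intro AE_I2 impI)
    fix \<omega> assume "\<forall>k. prob {\<eta>\<in>space M. dd \<omega> \<eta> \<le> 1 / real (Suc k)} > 0"
    then have "(\<lambda>m. sq m \<omega>) \<longlonglongrightarrow> 0" by (intro sq_tendsto) auto
    then have "(\<lambda>m. sqrt (sq m \<omega>)) \<longlonglongrightarrow> sqrt 0" by (rule tendsto_real_sqrt)
    then have "(\<lambda>m. sqrt (sq m \<omega>) * indicator A \<omega>) \<longlonglongrightarrow> sqrt 0 * indicator A \<omega>"
      by (rule tendsto_mult[OF _ tendsto_const])
    then show "(\<lambda>m. sqrt (sq m \<omega>) * indicator A \<omega>) \<longlonglongrightarrow> 0" by simp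
  qed
  have bnd: "AE \<omega> in M. norm (sqrt (sq m \<omega>) * indicator A \<omega>) \<le> sqrt Kb" for m
  proof (intro AE_I2)
    fix \<omega>
    show "norm (sqrt (sq m \<omega>) * indicator A \<omega>) \<le> sqrt Kb"
    proof (cases "\<omega> \<in> A")
      case True
      then have "sq m \<omega> \<le> Kb" unfolding Kb_def by (intro bound) (simp add: A_def)
      then show ?thesis using True sq_nonneg[of m \<omega>] by simp
    next
      case False
      have "0 \<le> Kb" using cc_nonneg[of 0] suminf_nonneg[OF summ cc_nonneg] zero_le_power2[of B]
        unfolding Kb_def by linarith
      then show ?thesis using False by simp
    qed
  qed
  have "(\<lambda>m. integral\<^sup>L M (\<lambda>\<omega>. sqrt (sq m \<omega>) * indicator A \<omega>)) \<longlonglongrightarrow> integral\<^sup>L M (\<lambda>\<omega>. 0::real)"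
  proof (rule integral_dominated_convergence[where w="\<lambda>_. sqrt Kb"])
    show "(\<lambda>\<omega>. 0::real) \<in> borel_measurable M" by simp
    show "(\<lambda>\<omega>. sqrt (sq m \<omega>) * indicator A \<omega>) \<in> borel_measurable M" for m
      using AM by measurable
    show "integrable M (\<lambda>_. sqrt Kb)" by simp
  qed (rule lim, rule bnd)
  then show ?thesis by (simp add: vn A_def)
qed

end

theorem mainTheorem2:
  fixes M :: "'a measure" and N :: "nat \<Rightarrow> nat" and W :: "nat \<Rightarrow> nat \<Rightarrow> nat \<Rightarrow> complex"
    and X :: "'a \<Rightarrow> nat \<Rightarrow> real" and B :: real
  assumes "prob_space M"
    and "\<forall>m. N m > 0"
    and "\<forall>m\<ge>1. \<forall>x j. j < N (m - 1) \<longrightarrow>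
            adj_lin (W m) (N m) (apply_lin (W m) (N (m - 1)) x) j = x j"
    and "\<forall>j<N 0. (\<lambda>\<omega>. X \<omega> j) \<in> borel_measurable M"
    and "integrable M (\<lambda>\<omega>. (vnorm (N 0) (X \<omega>))^2)"
    and "B > 0"
  shows "(\<lambda>m. integral\<^sup>L M (\<lambda>\<omega>. vnorm (N m) (scat M N W X m \<omega>)
              * indicator {\<eta>. vnorm (N 0) (X \<eta>) \<le> B} \<omega>)) \<longlonglongrightarrow> 0"
proof -
  interpret sc M N W X
  proof (rule sc.intro)
    show "prob_space M" by (rule assms(1))
    show "sc_axioms M N W X"
    proof (rule sc_axioms.intro)
      show "\<And>m. 0 < N m" using assms(2) by blast
      show "\<And>m x j. 1 \<le> m \<Longrightarrow> j < N (m - 1) \<Longrightarrow>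
          adj_lin (W m) (N m) (apply_lin (W m) (N (m - 1)) x) j = x j" using assms(3) by blast
      show "\<And>j. j < N 0 \<Longrightarrow> (\<lambda>\<omega>. X \<omega> j) \<in> borel_measurable M" using assms(4) by blast
      show "integrable M (\<lambda>\<omega>. (vnorm (N 0) (X \<omega>))\<^sup>2)" by (rule assms(5))
    qed
  qed
  show ?thesis by (rule final)
qed

end
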